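(* If $n > 1$ and $n \ne 5$, then there is some $n \times n$ panstochastic matrix that is not a convex combination of panstochastic permutation matrices.
   Context: An $n \times n$ matrix with nonnegative real entries is doubly stochastic if the sum of the entries along any of its rows or columns is equal to $1$. A doubly stochastic matrix is panstochastic if the sum of the entries along any downward diagonal or upward diagonal, either broken or unbroken, is equal to $1$ (indexing rows and columns by $\{0,1,\dots,n-1\}$, the $k$th upward diagonal consists of the entries $(i,j)$ with $i+j \equiv k \pmod n$, and the $k$th downward diagonal of the entries $(i,j)$ with $i-j \equiv k \pmod n$). A linear combination is convex if the coefficients are nonnegative and sum to $1$. *)

theory Defs
  imports Complex_Main
begin

text \<open>An n x n real matrix is represented as a function nat => nat => real;
  only the entries with row and column indices in {0..<n} are relevant.\<close>

definition doubly_stochastic :: "nat \<Rightarrow> (nat \<Rightarrow> nat \<Rightarrow> real) \<Rightarrow> bool" where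
  "doubly_stochastic n A \<longleftrightarrow>
     (\<forall>i<n. \<forall>j<n. 0 \<le> A i j) \<and>
     (\<forall>i<n. (\<Sum>j<n. A i j) = 1) \<and>
     (\<forall>j<n. (\<Sum>i<n. A i j) = 1)"

definition upward_diag :: "nat \<Rightarrow> nat \<Rightarrow> (nat \<times> nat) set" where
  "upward_diag n k = {(i, j). i < n \<and> j < n \<and> (i + j) mod n = k mod n}"

definition downward_diag :: "nat \<Rightarrow> nat \<Rightarrow> (nat \<times> nat) set" where
  "downward_diag n k = {(i, j). i < n \<and> j < n \<and> (int i - int j) mod int n = int k mod int n}"

definition panstochastic :: "nat \<Rightarrow> (nat \<Rightarrow> nat \<Rightarrow> real) \<Rightarrow> bool" where
  "panstochastic n A \<longleftrightarrow>
     doubly_stochastic n A \<and>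
     (\<forall>k<n. (\<Sum>(i, j)\<in>upward_diag n k. A i j) = 1) \<and>
     (\<forall>k<n. (\<Sum>(i, j)\<in>downward_diag n k. A i j) = 1)"

definition permutation_matrix :: "nat \<Rightarrow> (nat \<Rightarrow> nat \<Rightarrow> real) \<Rightarrow> bool" where
  "permutation_matrix n P \<longleftrightarrow>
     (\<exists>\<sigma>. bij_betw \<sigma> {..<n} {..<n} \<and>
          (\<forall>i<n. \<forall>j<n. P i j = (if \<sigma> i = j then 1 else 0)))"

definition convex_comb_of :: "nat \<Rightarrow> ((nat \<Rightarrow> nat \<Rightarrow> real) \<Rightarrow> bool) \<Rightarrow> (nat \<Rightarrow> nat \<Rightarrow> real) \<Rightarrow> bool" where
  "convex_comb_of n S A \<longleftrightarrow>
     (\<exists>m::nat. \<exists>c::nat \<Rightarrow> real. \<exists>P::nat \<Rightarrow> nat \<Rightarrow> nat \<Rightarrow> real.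
        (\<forall>l<m. 0 \<le> c l \<and> S (P l)) \<and> (\<Sum>l<m. c l) = 1 \<and>
        (\<forall>i<n. \<forall>j<n. A i j = (\<Sum>l<m. c l * P l i j)))"

end

theory Submission
  imports Defs
begin

lemma up_eq:
  assumes "k < n"
  shows "upward_diag n k = (\<lambda>i. (i, (k + n - i) mod n)) ` {..<n}"
proof (intro set_eqI iffI)
  fix x assume "x \<in> upward_diag n k"
  then obtain i j where x: "x = (i,j)" "i < n" "j < n" "(i + j) mod n = k"
    unfolding upward_diag_def using assms by auto
  have e1: "k + n - i = k + (n - i)" using x by simp
  have "(k + n - i) mod n = ((i + j) mod n + (n - i)) mod n" unfolding e1 x(4) ..
  also have "\<dots> = (i + j + (n - i)) mod n" by (rule mod_add_left_eq)
  also have "i + j + (n - i) = j + n" using x by simp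
  finally have "(k + n - i) mod n = j" using x by simp
  then show "x \<in> (\<lambda>i. (i, (k + n - i) mod n)) ` {..<n}" using x by auto
next
  fix x assume "x \<in> (\<lambda>i. (i, (k + n - i) mod n)) ` {..<n}"
  then obtain i where x: "x = (i, (k + n - i) mod n)" "i < n" by auto
  have "(i + (k + n - i) mod n) mod n = (i + (k + n - i)) mod n" by (rule mod_add_right_eq)
  also have "i + (k + n - i) = k + n" using x by simp
  finally have "(i + (k + n - i) mod n) mod n = k" using assms by simp
  then show "x \<in> upward_diag n k" using x assms unfolding upward_diag_def by auto
qed

lemma int_mod_sub:
  assumes "k < n" "i < n"
  shows "int ((i + n - k) mod n) = (int i - int k) mod int n"
proof -
  have "int ((i + n - k) mod n) = int (i + n - k) mod int n" by (simp add: of_nat_mod)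
  also have "int (i + n - k) = (int i - int k) + int n" using assms by simp
  also have "((int i - int k) + int n) mod int n = (int i - int k) mod int n" by simp
  finally show ?thesis .
qed

lemma down_eq:
  assumes "k < n"
  shows "downward_diag n k = (\<lambda>i. (i, (i + n - k) mod n)) ` {..<n}"
proof (intro set_eqI iffI)
  fix x assume "x \<in> downward_diag n k"
  then obtain i j where x: "x = (i,j)" "i < n" "j < n" "(int i - int j) mod int n = int k"
    unfolding downward_diag_def using assms by auto
  have "int ((i + n - k) mod n) = (int i - int k) mod int n" using int_mod_sub assms x by blast
  also have "\<dots> = (int i - (int i - int j) mod int n) mod int n" using x by simp
  also have "\<dots> = (int i - (int i - int j)) mod int n" by (rule mod_diff_right_eq)
  also have "\<dots> = int j" using x by simp
  finally have "(i + n - k) mod n = j" by linarith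
  then show "x \<in> (\<lambda>i. (i, (i + n - k) mod n)) ` {..<n}" using x by auto
next
  fix x assume "x \<in> (\<lambda>i. (i, (i + n - k) mod n)) ` {..<n}"
  then obtain i where x: "x = (i, (i + n - k) mod n)" "i < n" by auto
  have "(int i - int ((i + n - k) mod n)) mod int n = (int i - (int i - int k) mod int n) mod int n"
    using int_mod_sub assms x by simp
  also have "\<dots> = (int i - (int i - int k)) mod int n" by (rule mod_diff_right_eq)
  also have "\<dots> = int k" using assms by simp
  finally show "x \<in> downward_diag n k" using x assms unfolding downward_diag_def by auto
qed

lemma sum_up:
  assumes "k < n"
  shows "(\<Sum>(i, j)\<in>upward_diag n k. f i j) = (\<Sum>i<n. f i ((k + n - i) mod n))"
  unfolding up_eq[OF assms] by (subst sum.reindex) (auto simp: inj_on_def)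

lemma sum_down:
  assumes "k < n"
  shows "(\<Sum>(i, j)\<in>downward_diag n k. f i j) = (\<Sum>i<n. f i ((i + n - k) mod n))"
  unfolding down_eq[OF assms] by (subst sum.reindex) (auto simp: inj_on_def)

lemma two_ones:
  fixes f :: "'a \<Rightarrow> real"
  assumes "finite S" "\<forall>x\<in>S. f x \<ge> 0" "sum f S = 1" "x \<in> S" "y \<in> S" "x \<noteq> y" "f x = 1" "f y = 1"
  shows False
proof -
  have "sum f {x, y} \<le> sum f S" using assms by (intro sum_mono2) auto
  moreover have "sum f {x, y} = 2" using assms by simp
  ultimately show False using assms by simp
qed

lemma pm_vals:
  assumes "permutation_matrix n P" "i < n" "j < n"
  shows "P i j = 0 \<or> P i j = 1"
  using assms unfolding permutation_matrix_def by auto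

lemma pm_nonneg:
  assumes "permutation_matrix n P" "i < n" "j < n"
  shows "P i j \<ge> 0"
  using pm_vals[OF assms] by auto

lemma clique_bound:
  assumes n: "n \<ge> 3" and pm: "permutation_matrix n P" and ps: "panstochastic n P"
  shows "P 0 0 + P 1 (n-1) + P 1 0 + P 1 1 \<le> 1"
proof -
  have nn: "\<forall>i<n. \<forall>j<n. P i j \<ge> 0" using pm_nonneg[OF pm] by blast
  have row1: "(\<Sum>j<n. P 1 j) = 1" using ps n unfolding panstochastic_def doubly_stochastic_def by auto
  have col0: "(\<Sum>i<n. P i 0) = 1" using ps n unfolding panstochastic_def doubly_stochastic_def by auto
  have d0: "(\<Sum>i<n. P i ((i + n - 0) mod n)) = 1"
    using ps n sum_down[of 0 n "\<lambda>i j. P i j"] unfolding panstochastic_def by auto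
  have u0: "(\<Sum>i<n. P i ((0 + n - i) mod n)) = 1"
    using ps n sum_up[of 0 n "\<lambda>i j. P i j"] unfolding panstochastic_def by auto
  have v: "\<And>i j. i < n \<Longrightarrow> j < n \<Longrightarrow> P i j = 0 \<or> P i j = 1" using pm_vals[OF pm] by blast
  have a1: "\<not> (P 1 (n-1) = 1 \<and> P 1 0 = 1)"
    using two_ones[of "{..<n}" "\<lambda>j. P 1 j" "n-1" 0] row1 nn n by auto
  have a2: "\<not> (P 1 (n-1) = 1 \<and> P 1 1 = 1)"
  proof
    assume as: "P 1 (n-1) = 1 \<and> P 1 1 = 1"
    have "n - 1 \<noteq> 1" "n - 1 \<in> {..<n}" "1 \<in> {..<n}" using n by auto
    then show False using two_ones[of "{..<n}" "\<lambda>j. P 1 j" "n-1" 1] row1 nn n as by auto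
  qed
  have a3: "\<not> (P 1 0 = 1 \<and> P 1 1 = 1)"
    using two_ones[of "{..<n}" "\<lambda>j. P 1 j" 0 1] row1 nn n by auto
  have a4: "\<not> (P 0 0 = 1 \<and> P 1 0 = 1)"
    using two_ones[of "{..<n}" "\<lambda>i. P i 0" 0 1] col0 nn n by auto
  have m1: "(1 + n - 0) mod n = 1" using n by (simp add: mod_if)
  have a5: "\<not> (P 0 0 = 1 \<and> P 1 1 = 1)"
    using two_ones[of "{..<n}" "\<lambda>i. P i ((i + n - 0) mod n)" 0 1] d0 nn n m1 by auto
  have m2: "(0 + n - 1) mod n = n - 1" using n by simp
  have a6: "\<not> (P 0 0 = 1 \<and> P 1 (n-1) = 1)"
    using two_ones[of "{..<n}" "\<lambda>i. P i ((0 + n - i) mod n)" 0 1] u0 nn n m2 by auto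
  have "P 0 0 = 0 \<or> P 0 0 = 1" "P 1 (n-1) = 0 \<or> P 1 (n-1) = 1" "P 1 0 = 0 \<or> P 1 0 = 1" "P 1 1 = 0 \<or> P 1 1 = 1"
    using v n by auto
  then show ?thesis using a1 a2 a3 a4 a5 a6 by auto
qed

lemma not_cc_clique:
  fixes A :: "nat \<Rightarrow> nat \<Rightarrow> real"
  assumes n: "n \<ge> 3" and big: "A 0 0 + A 1 (n-1) + A 1 0 + A 1 1 > 1"
  shows "\<not> convex_comb_of n (\<lambda>P. permutation_matrix n P \<and> panstochastic n P) A"
proof
  assume "convex_comb_of n (\<lambda>P. permutation_matrix n P \<and> panstochastic n P) A"
  then obtain m and c :: "nat \<Rightarrow> real" and P where h: "\<forall>l<m. 0 \<le> c l \<and> permutation_matrix n (P l) \<and> panstochastic n (P l)"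
    "(\<Sum>l<m. c l) = 1" "\<forall>i<n. \<forall>j<n. A i j = (\<Sum>l<m. c l * P l i j)"
    unfolding convex_comb_of_def by (elim exE conjE) blast
  have ix: "0 < n" "1 < n" "n - 1 < n" using n by auto
  have "A 0 0 + A 1 (n-1) + A 1 0 + A 1 1 = (\<Sum>l<m. c l * P l 0 0) + (\<Sum>l<m. c l * P l 1 (n-1))
      + (\<Sum>l<m. c l * P l 1 0) + (\<Sum>l<m. c l * P l 1 1)"
    using h(3) ix by simp
  also have "\<dots> = (\<Sum>l<m. c l * (P l 0 0 + P l 1 (n-1) + P l 1 0 + P l 1 1))"
    by (simp only: sum.distrib[symmetric] distrib_left)
  also have "\<dots> \<le> (\<Sum>l<m. c l * 1)"
  proof (rule sum_mono)
    fix l assume "l \<in> {..<m}"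
    then have "0 \<le> c l" "P l 0 0 + P l 1 (n-1) + P l 1 0 + P l 1 1 \<le> 1"
      using h(1) clique_bound[OF n] by auto
    then show "c l * (P l 0 0 + P l 1 (n-1) + P l 1 0 + P l 1 1) \<le> c l * 1"
      by (rule mult_left_mono[rotated])
  qed
  also have "\<dots> = 1" using h(2) by simp
  finally show False using big by simp
qed

lemma not_cc_empty:
  fixes A :: "nat \<Rightarrow> nat \<Rightarrow> real"
  assumes "\<And>P. \<not> (permutation_matrix n P \<and> panstochastic n P)"
  shows "\<not> convex_comb_of n (\<lambda>P. permutation_matrix n P \<and> panstochastic n P) A"
proof
  assume "convex_comb_of n (\<lambda>P. permutation_matrix n P \<and> panstochastic n P) A"
  then obtain m and c :: "nat \<Rightarrow> real" and P where h: "\<forall>l<m. 0 \<le> c l \<and> permutation_matrix n (P l) \<and> panstochastic n (P l)"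
    "(\<Sum>l<m. c l) = 1"
    unfolding convex_comb_of_def by (elim exE conjE) blast
  show False
  proof (cases m)
    case 0 then show ?thesis using h by simp
  next
    case (Suc m') then show ?thesis using h(1) assms by auto
  qed
qed

lemma double_sum_lt: "2 * (\<Sum>i<n. i) + n = n * (n::nat)"
  by (induction n) (auto simp: algebra_simps)

lemma up_mem_iff:
  fixes n k i j :: nat
  assumes "k < n" "i < n" "j < n"
  shows "(i + j) mod n = k \<longleftrightarrow> j = (k + n - i) mod n"
proof -
  have "(i, j) \<in> upward_diag n k \<longleftrightarrow> (i, j) \<in> (\<lambda>i. (i, (k + n - i) mod n)) ` {..<n}"
    using up_eq[OF assms(1)] by simp
  then show ?thesis using assms unfolding upward_diag_def by auto
qed

lemma no_pan_even:
  assumes ev: "even n" and np: "n > 0"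
  shows "\<not> (permutation_matrix n P \<and> panstochastic n P)"
proof
  assume as: "permutation_matrix n P \<and> panstochastic n P"
  then obtain \<sigma> where bs: "bij_betw \<sigma> {..<n} {..<n}" and Pd: "\<forall>i<n. \<forall>j<n. P i j = (if \<sigma> i = j then 1 else 0)"
    unfolding permutation_matrix_def by blast
  have sl: "\<And>i. i < n \<Longrightarrow> \<sigma> i < n" using bs bij_betwE by blast
  have nn: "\<forall>i<n. \<forall>j<n. P i j \<ge> 0" using Pd by auto
  define f where "f i = (i + \<sigma> i) mod n" for i
  have inj: "inj_on f {..<n}"
  proof (rule inj_onI)
    fix i i' assume i: "i \<in> {..<n}" "i' \<in> {..<n}" and e: "f i = f i'"
    show "i = i'"
    proof (rule ccontr)
      assume ne: "i \<noteq> i'"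
      define k where "k = f i"
      have k: "k < n" using np unfolding k_def f_def by simp
      have s1: "(\<Sum>i<n. P i ((k + n - i) mod n)) = 1"
        using as k sum_up[OF k, of "\<lambda>i j. P i j"] unfolding panstochastic_def by auto
      have "P i ((k + n - i) mod n) = 1"
        using Pd i sl up_mem_iff[OF k, of i "\<sigma> i"] unfolding k_def f_def by auto
      moreover have "P i' ((k + n - i') mod n) = 1"
        using Pd i sl up_mem_iff[OF k, of i' "\<sigma> i'"] e unfolding k_def f_def by auto
      ultimately show False
        using two_ones[of "{..<n}" "\<lambda>i. P i ((k + n - i) mod n)" i i'] s1 nn i ne np by auto
    qed
  qed
  have img: "f ` {..<n} = {..<n}"
    by (rule endo_inj_surj) (use inj np in \<open>auto simp: f_def\<close>)
  have bf: "bij_betw f {..<n} {..<n}" using inj img by (simp add: bij_betw_def)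
  have s1: "(\<Sum>i<n. f i) = (\<Sum>i<n. i)" using sum.reindex_bij_betw[OF bf, of "\<lambda>i. i"] by simp
  have s2: "(\<Sum>i<n. \<sigma> i) = (\<Sum>i<n. i)" using sum.reindex_bij_betw[OF bs, of "\<lambda>i. i"] by simp
  define S where "S = (\<Sum>i<n. (i::nat))"
  have "S mod n = (\<Sum>i<n. (i + \<sigma> i) mod n) mod n" using s1 unfolding S_def f_def by simp
  also have "\<dots> = (\<Sum>i<n. (i + \<sigma> i)) mod n" by (rule mod_sum_eq)
  also have "(\<Sum>i<n. (i + \<sigma> i)) = 2 * S" using s2 unfolding S_def by (simp add: sum.distrib)
  finally have e1: "S mod n = (2 * S) mod n" .
  have "(2 * S + n) mod n = 0" using double_sum_lt[of n] unfolding S_def by simp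
  then have "(2 * S) mod n = 0" by simp
  then have "S mod n = 0" using e1 by simp
  then obtain q where q: "S = n * q" by blast
  have "n * (2 * q + 1) = n * n" using double_sum_lt[of n] q unfolding S_def by (simp add: algebra_simps)
  then have "2 * q + 1 = n" using np mult_left_cancel[of n "2*q+1" n] by simp
  then show False using ev by presburger
qed

definition chk :: "nat \<Rightarrow> (nat \<Rightarrow> nat \<Rightarrow> nat) \<Rightarrow> nat \<Rightarrow> bool" where
  "chk n m D \<longleftrightarrow> list_all (\<lambda>i. sum_list (map (m i) [0..<n]) = D) [0..<n] \<and>
     list_all (\<lambda>j. sum_list (map (\<lambda>i. m i j) [0..<n]) = D) [0..<n] \<and>
     list_all (\<lambda>k. sum_list (map (\<lambda>i. m i ((k + n - i) mod n)) [0..<n]) = D) [0..<n] \<and>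
     list_all (\<lambda>k. sum_list (map (\<lambda>i. m i ((i + n - k) mod n)) [0..<n]) = D) [0..<n]"

lemma sum_list_upt0: "sum_list (map f [0..<n]) = (\<Sum>i<n. f i)"
  by (induction n) simp_all

lemma list_all_upt0: "list_all P [0..<n] \<longleftrightarrow> (\<forall>i<n. P i)"
  by (auto simp: list_all_iff)

lemma chk_pan:
  assumes c: "chk n m D" and D: "D > 0"
  shows "panstochastic n (\<lambda>i j. real (m i j) / real D)"
proof -
  have e: "\<And>f. (\<Sum>i<n. real (f i) / real D) = real (\<Sum>i<n. f i) / real D"
    by (simp add: sum_divide_distrib)
  have c': "\<forall>i<n. (\<Sum>j<n. m i j) = D" "\<forall>j<n. (\<Sum>i<n. m i j) = D"
     "\<forall>k<n. (\<Sum>i<n. m i ((k + n - i) mod n)) = D" "\<forall>k<n. (\<Sum>i<n. m i ((i + n - k) mod n)) = D"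
    using c unfolding chk_def list_all_upt0 sum_list_upt0 by auto
  show ?thesis
    unfolding panstochastic_def doubly_stochastic_def
    using c' D by (simp add: sum_up sum_down e)
qed

definition m7 :: "nat \<Rightarrow> nat \<Rightarrow> nat" where
  "m7 i j = [[1,0,0,0,1,0,0],[1,1,0,0,0,0,0],[0,0,0,1,0,1,0],[0,0,1,0,0,1,0],
     [0,0,1,0,0,0,1],[0,1,0,0,0,0,1],[0,0,0,1,1,0,0]] ! i ! j"

definition m9 :: "nat \<Rightarrow> nat \<Rightarrow> nat" where
  "m9 i j = [[1,0,0,1,0,1,0,0,0],[0,2,0,0,0,0,0,0,1],[0,0,0,0,0,0,2,1,0],[0,0,1,0,1,1,0,0,0],
    [1,1,0,1,0,0,0,0,0],[0,0,1,0,0,0,0,2,0],[1,0,0,0,2,0,0,0,0],[0,0,0,0,0,0,1,0,2],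
    [0,0,1,1,0,1,0,0,0]] ! i ! j"

definition m11 :: "nat \<Rightarrow> nat \<Rightarrow> nat" where
  "m11 i j = [[1,0,0,0,0,0,1,0,0,0,0],[0,1,0,0,0,0,0,0,0,0,1],[0,0,0,1,0,1,0,0,0,0,0],
    [0,1,0,0,0,0,0,1,0,0,0],[0,0,0,0,0,1,0,0,0,1,0],[0,0,1,0,0,0,0,1,0,0,0],
    [0,0,0,0,0,0,0,0,1,0,1],[0,0,1,1,0,0,0,0,0,0,0],[1,0,0,0,1,0,0,0,0,0,0],
    [0,0,0,0,0,0,1,0,1,0,0],[0,0,0,0,1,0,0,0,0,1,0]] ! i ! j"

lemma chk7: "chk 7 m7 2" by code_simp
lemma chk9: "chk 9 m9 3" by code_simp
lemma chk11: "chk 11 m11 2" by code_simp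

lemma cl7: "m7 0 0 + m7 1 6 + m7 1 0 + m7 1 1 = 3" by code_simp
lemma cl9: "m9 0 0 + m9 1 8 + m9 1 0 + m9 1 1 = 4" by code_simp
lemma cl11: "m11 0 0 + m11 1 10 + m11 1 0 + m11 1 1 = 3" by code_simp

lemma case_explicit:
  assumes "n = 7 \<or> n = 9 \<or> n = 11"
  shows "\<exists>A. panstochastic n A \<and>
           \<not> convex_comb_of n (\<lambda>P. permutation_matrix n P \<and> panstochastic n P) A"
proof -
  have gen: "\<exists>A. panstochastic n A \<and> \<not> convex_comb_of n (\<lambda>P. permutation_matrix n P \<and> panstochastic n P) A"
    if "chk n m D" "D > 0" "m 0 0 + m 1 (n-1) + m 1 0 + m 1 1 > D" "n \<ge> 3" for m D
  proof (intro exI conjI)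
    show "panstochastic n (\<lambda>i j. real (m i j) / real D)" using chk_pan that by blast
    have "real (m 0 0 + m 1 (n-1) + m 1 0 + m 1 1) > real D" using that by linarith
    then have "(real (m 0 0) + real (m 1 (n-1)) + real (m 1 0) + real (m 1 1)) / real D > 1"
      using that by simp
    then have "real (m 0 0) / real D + real (m 1 (n-1)) / real D + real (m 1 0) / real D + real (m 1 1) / real D > 1"
      by (simp add: add_divide_distrib)
    then show "\<not> convex_comb_of n (\<lambda>P. permutation_matrix n P \<and> panstochastic n P) (\<lambda>i j. real (m i j) / real D)"
      using not_cc_clique[of n "\<lambda>i j. real (m i j) / real D"] that by simp
  qed
  show ?thesis using assms
  proof (elim disjE)
    assume "n = 7" then show ?thesis using gen[of m7 2] chk7 cl7 by simp
  next
    assume "n = 9" then show ?thesis using gen[of m9 3] chk9 cl9 by simp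
  next
    assume "n = 11" then show ?thesis using gen[of m11 2] chk11 cl11 by simp
  qed
qed

definition ind :: "nat \<Rightarrow> int \<Rightarrow> int \<Rightarrow> real" where
  "ind n X Y = (if X mod int n = Y mod int n then 1 else 0)"

lemma ind_cong: "X mod int n = X' mod int n \<Longrightarrow> ind n X Y = ind n X' Y"
  unfolding ind_def by simp

lemma dvd_small_zero:
  fixes d :: int
  assumes "int n dvd d" "\<bar>d\<bar> < int n"
  shows "d = 0"
proof -
  obtain q where q: "d = int n * q" using assms by (auto elim: dvdE)
  have "\<bar>q\<bar> < 1"
  proof (rule ccontr)
    assume "\<not> \<bar>q\<bar> < 1"
    then have "int n * 1 \<le> int n * \<bar>q\<bar>" by (intro mult_left_mono) auto
    then show False using assms q by (simp add: abs_mult)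
  qed
  then show ?thesis using q by simp
qed

lemma cnt:
  assumes n: "n > 0" and cp: "coprime \<alpha> (int n)"
    and f: "\<forall>x<n. f x mod int n = (\<alpha> * int x + \<beta>) mod int n"
  shows "(\<Sum>x<n. ind n (f x) \<gamma>) = 1"
proof -
  define g where "g x = nat ((\<alpha> * int x + \<beta>) mod int n)" for x
  have gl: "g x < n" for x using n unfolding g_def by (simp add: nat_less_iff)
  have inj: "inj_on g {..<n}"
  proof (rule inj_onI)
    fix x y assume xy: "x \<in> {..<n}" "y \<in> {..<n}" "g x = g y"
    then have "(\<alpha> * int x + \<beta>) mod int n = (\<alpha> * int y + \<beta>) mod int n"
      unfolding g_def using n by (simp add: eq_nat_nat_iff)
    then have "int n dvd (\<alpha> * int x + \<beta>) - (\<alpha> * int y + \<beta>)"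
      using mod_eq_dvd_iff by blast
    then have "int n dvd \<alpha> * (int x - int y)" by (simp add: algebra_simps)
    then have "int n dvd (int x - int y)"
      using cp coprime_dvd_mult_right_iff coprime_commute by blast
    then have "int x - int y = 0" using xy by (intro dvd_small_zero) auto
    then show "x = y" by simp
  qed
  have img: "g ` {..<n} = {..<n}" by (rule endo_inj_surj) (use inj gl in auto)
  have bij: "bij_betw g {..<n} {..<n}" using inj img by (simp add: bij_betw_def)
  define c where "c = nat (\<gamma> mod int n)"
  have cl: "c < n" using n unfolding c_def by (simp add: nat_less_iff)
  have e: "ind n (f x) \<gamma> = (if g x = c then 1 else 0)" if "x < n" for x
  proof -
    have "f x mod int n = \<gamma> mod int n \<longleftrightarrow> (\<alpha> * int x + \<beta>) mod int n = \<gamma> mod int n"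
      using f that by simp
    also have "\<dots> \<longleftrightarrow> g x = c" unfolding g_def c_def using n by (auto simp add: eq_nat_nat_iff)
    finally show ?thesis unfolding ind_def by simp
  qed
  have "(\<Sum>x<n. ind n (f x) \<gamma>) = (\<Sum>x<n. (\<lambda>y. if y = c then 1 else 0::real) (g x))"
    using e by (intro sum.cong) auto
  also have "\<dots> = (\<Sum>y<n. if y = c then 1 else 0::real)" by (rule sum.reindex_bij_betw[OF bij])
  also have "\<dots> = 1" using cl by simp
  finally show ?thesis .
qed

lemma cnt_const:
  assumes f: "\<forall>x<n. f x mod int n = \<beta> mod int n"
  shows "(\<Sum>x<n. ind n (f x) \<gamma>) = real n * ind n \<beta> \<gamma>"
proof -
  have "(\<Sum>x<n. ind n (f x) \<gamma>) = (\<Sum>x<n. ind n \<beta> \<gamma>)"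
    using f by (intro sum.cong) (auto intro: ind_cong)
  then show ?thesis by simp
qed

definition E :: "nat \<Rightarrow> nat \<Rightarrow> nat \<Rightarrow> nat \<Rightarrow> nat \<Rightarrow> real" where
  "E n a b i j = (if i = a \<and> j = b then 1 else 0)
     - (ind n (int i) (int a) + ind n (int j) (int b) + ind n (int i - int j) (int a - int b)
        + ind n (int i + int j) (int a + int b)) / real n + 3 / (real n)^2"

lemma E_sum:
  assumes n: "n > 0"
  shows "(\<Sum>x<n. E n a b (p x) (q x)) = (\<Sum>x<n. if p x = a \<and> q x = b then 1 else 0)
    - ((\<Sum>x<n. ind n (int (p x)) (int a)) + (\<Sum>x<n. ind n (int (q x)) (int b))
       + (\<Sum>x<n. ind n (int (p x) - int (q x)) (int a - int b))
       + (\<Sum>x<n. ind n (int (p x) + int (q x)) (int a + int b))) / real n + 3 / real n"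
  using n by (simp add: E_def sum.distrib sum_subtractf sum_divide_distrib[symmetric] power2_eq_square)

lemma ind_nat: "i < n \<Longrightarrow> a < n \<Longrightarrow> ind n (int i) (int a) = (if i = a then 1 else 0)"
  unfolding ind_def by simp

lemma cp1: "coprime (1::int) m" by simp
lemma cpm1: "coprime (-1::int) m" by simp
lemma cp2: "odd m \<Longrightarrow> coprime (2::int) (int m)"
  by simp

lemma delta1: "b < (n::nat) \<Longrightarrow> (\<Sum>x<n. if x = b then 1 else 0::real) = 1"
  by (subst sum.delta) auto

lemma delta_sum: "b < (n::nat) \<Longrightarrow> (\<Sum>x<n. if P \<and> x = b then 1 else 0::real) = (if P then 1 else 0)"
  by (cases P) (auto simp: delta1)

lemma delta_sum2: "b < (n::nat) \<Longrightarrow> (\<Sum>x<n. if x = b \<and> P x then 1 else 0::real) = (if P b then 1 else 0)"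
proof -
  assume b: "b < n"
  have "(\<Sum>x<n. if x = b \<and> P x then 1 else 0::real) = (\<Sum>x<n. if x = b then (if P b then 1 else 0) else 0)"
    by (intro sum.cong) auto
  also have "\<dots> = (if P b then 1 else 0)" using b delta1[OF b] by auto
  finally show ?thesis .
qed

lemma E_row:
  assumes n: "odd n" "n > 0" and ab: "a < n" "b < n" and i: "i < n"
  shows "(\<Sum>x<n. E n a b i x) = 0"
proof -
  have s0: "(\<Sum>x<n. if i = a \<and> x = b then 1 else 0::real) = (if i = a then 1 else 0)"
    using delta_sum[OF ab(2)] by simp
  have s1: "(\<Sum>x<n. ind n (int i) (int a)) = real n * (if i = a then 1 else 0)"
    using ind_nat[OF i ab(1)] by simp
  have s2: "(\<Sum>x<n. ind n (int x) (int b)) = 1"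
    by (rule cnt[where \<alpha>=1 and \<beta>=0]) (use n in auto)
  have s3: "(\<Sum>x<n. ind n (int i - int x) (int a - int b)) = 1"
    by (rule cnt[where \<alpha>="-1" and \<beta>="int i"]) (use n in auto)
  have s4: "(\<Sum>x<n. ind n (int i + int x) (int a + int b)) = 1"
    by (rule cnt[where \<alpha>=1 and \<beta>="int i"]) (use n in \<open>auto simp: add.commute\<close>)
  show ?thesis
    using E_sum[OF n(2), of a b "\<lambda>x. i" "\<lambda>x. x"] s0 s1 s2 s3 s4 n
    by (simp add: field_simps)
qed

lemma E_col:
  assumes n: "odd n" "n > 0" and ab: "a < n" "b < n" and j: "j < n"
  shows "(\<Sum>x<n. E n a b x j) = 0"
proof -
  have s0: "(\<Sum>x<n. if x = a \<and> j = b then 1 else 0::real) = (if j = b then 1 else 0)"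
    using delta_sum2[OF ab(1), of "\<lambda>x. j = b"] by simp
  have s1: "(\<Sum>x<n. ind n (int j) (int b)) = real n * (if j = b then 1 else 0)"
    using ind_nat[OF j ab(2)] by simp
  have s2: "(\<Sum>x<n. ind n (int x) (int a)) = 1"
    by (rule cnt[where \<alpha>=1 and \<beta>=0]) (use n in auto)
  have s3: "(\<Sum>x<n. ind n (int x - int j) (int a - int b)) = 1"
    by (rule cnt[where \<alpha>="1" and \<beta>="- int j"]) (use n in auto)
  have s4: "(\<Sum>x<n. ind n (int x + int j) (int a + int b)) = 1"
    by (rule cnt[where \<alpha>=1 and \<beta>="int j"]) (use n in \<open>auto simp: add.commute\<close>)
  show ?thesis
    using E_sum[OF n(2), of a b "\<lambda>x. x" "\<lambda>x. j"] s0 s1 s2 s3 s4 n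
    by (simp add: field_simps)
qed


lemma E_up:
  assumes n: "odd n" "n > 0" and ab: "a < n" "b < n" and k: "k < n"
  shows "(\<Sum>x<n. E n a b x ((k + n - x) mod n)) = 0"
proof -
  define q where "q x = (k + n - x) mod n" for x
  have iq: "int (q x) = (int k - int x) mod int n" if "x < n" for x
    unfolding q_def using int_mod_sub[OF that k] .
  have s0: "(\<Sum>x<n. if x = a \<and> q x = b then 1 else 0::real) = (if q a = b then 1 else 0)"
    using delta_sum2[OF ab(1), of "\<lambda>x. q x = b"] by simp
  have s1: "(\<Sum>x<n. ind n (int x) (int a)) = 1"
    by (rule cnt[where \<alpha>=1 and \<beta>=0]) (use n in auto)
  have s2: "(\<Sum>x<n. ind n (int (q x)) (int b)) = 1"
    by (rule cnt[where \<alpha>="-1" and \<beta>="int k"]) (use n iq in auto)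
  have s3: "(\<Sum>x<n. ind n (int x - int (q x)) (int a - int b)) = 1"
  proof (rule cnt[where \<alpha>="2" and \<beta>="- int k"])
    show "\<forall>x<n. (int x - int (q x)) mod int n = (2 * int x + - int k) mod int n"
    proof (intro allI impI)
      fix x assume x: "x < n"
      have "(int x - int (q x)) mod int n = (int x - (int k - int x) mod int n) mod int n" using iq x by simp
      also have "\<dots> = (int x - (int k - int x)) mod int n" by (rule mod_diff_right_eq)
      finally show "(int x - int (q x)) mod int n = (2 * int x + - int k) mod int n" by (simp add: algebra_simps)
    qed
  qed (use n in auto)
  have s4: "(\<Sum>x<n. ind n (int x + int (q x)) (int a + int b)) = real n * ind n (int k) (int a + int b)"
  proof (rule cnt_const)
    show "\<forall>x<n. (int x + int (q x)) mod int n = int k mod int n"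
    proof (intro allI impI)
      fix x assume x: "x < n"
      have "(int x + int (q x)) mod int n = (int x + (int k - int x) mod int n) mod int n" using iq x by simp
      also have "\<dots> = (int x + (int k - int x)) mod int n" by (rule mod_add_right_eq)
      finally show "(int x + int (q x)) mod int n = int k mod int n" by simp
    qed
  qed
  have c: "(if q a = b then 1 else 0) = ind n (int k) (int a + int b)"
  proof -
    have "q a = b \<longleftrightarrow> (a + b) mod n = k" unfolding q_def using up_mem_iff[OF k ab] by auto
    also have "\<dots> \<longleftrightarrow> int k mod int n = (int a + int b) mod int n"
      using k by (metis of_nat_add of_nat_eq_iff zmod_int mod_less)
    finally show ?thesis unfolding ind_def by simp
  qed
  show ?thesis
    using E_sum[OF n(2), of a b "\<lambda>x. x" q] s0 s1 s2 s3 s4 c n unfolding q_def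
    by (simp add: field_simps)
qed

lemma down_mem_iff:
  fixes n k i j :: nat
  assumes "k < n" "i < n" "j < n"
  shows "(int i - int j) mod int n = int k \<longleftrightarrow> j = (i + n - k) mod n"
proof -
  have "(i, j) \<in> downward_diag n k \<longleftrightarrow> (i, j) \<in> (\<lambda>i. (i, (i + n - k) mod n)) ` {..<n}"
    using down_eq[OF assms(1)] by simp
  then show ?thesis using assms unfolding downward_diag_def by auto
qed

lemma E_down:
  assumes n: "odd n" "n > 0" and ab: "a < n" "b < n" and k: "k < n"
  shows "(\<Sum>x<n. E n a b x ((x + n - k) mod n)) = 0"
proof -
  define q where "q x = (x + n - k) mod n" for x
  have iq: "int (q x) = (int x - int k) mod int n" if "x < n" for x
    unfolding q_def using int_mod_sub[OF k that] .
  have s0: "(\<Sum>x<n. if x = a \<and> q x = b then 1 else 0::real) = (if q a = b then 1 else 0)"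
    using delta_sum2[OF ab(1), of "\<lambda>x. q x = b"] by simp
  have s1: "(\<Sum>x<n. ind n (int x) (int a)) = 1"
    by (rule cnt[where \<alpha>=1 and \<beta>=0]) (use n in auto)
  have s2: "(\<Sum>x<n. ind n (int (q x)) (int b)) = 1"
    by (rule cnt[where \<alpha>="1" and \<beta>="- int k"]) (use n iq in auto)
  have s4: "(\<Sum>x<n. ind n (int x + int (q x)) (int a + int b)) = 1"
  proof (rule cnt[where \<alpha>="2" and \<beta>="- int k"])
    show "\<forall>x<n. (int x + int (q x)) mod int n = (2 * int x + - int k) mod int n"
    proof (intro allI impI)
      fix x assume x: "x < n"
      have "(int x + int (q x)) mod int n = (int x + (int x - int k) mod int n) mod int n" using iq x by simp
      also have "\<dots> = (int x + (int x - int k)) mod int n" by (rule mod_add_right_eq)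
      finally show "(int x + int (q x)) mod int n = (2 * int x + - int k) mod int n" by (simp add: algebra_simps)
    qed
  qed (use n in auto)
  have s3: "(\<Sum>x<n. ind n (int x - int (q x)) (int a - int b)) = real n * ind n (int k) (int a - int b)"
  proof (rule cnt_const)
    show "\<forall>x<n. (int x - int (q x)) mod int n = int k mod int n"
    proof (intro allI impI)
      fix x assume x: "x < n"
      have "(int x - int (q x)) mod int n = (int x - (int x - int k) mod int n) mod int n" using iq x by simp
      also have "\<dots> = (int x - (int x - int k)) mod int n" by (rule mod_diff_right_eq)
      finally show "(int x - int (q x)) mod int n = int k mod int n" by simp
    qed
  qed
  have c: "(if q a = b then 1 else 0) = ind n (int k) (int a - int b)"
  proof -
    have "q a = b \<longleftrightarrow> (int a - int b) mod int n = int k" unfolding q_def using down_mem_iff[OF k ab] by auto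
    also have "\<dots> \<longleftrightarrow> int k mod int n = (int a - int b) mod int n"
      using k by auto
    finally show ?thesis unfolding ind_def by simp
  qed
  show ?thesis
    using E_sum[OF n(2), of a b "\<lambda>x. x" q] s0 s1 s2 s3 s4 c n unfolding q_def
    by (simp add: field_simps)
qed

lemma comb_int:
  fixes I J N M :: int
  assumes r: "0 \<le> I" "I < N" "0 \<le> J" "J < N" "N \<ge> 5" "N = 2 * M + 1"
  and c1: "I = 0 \<or> J = 0 \<or> (I - J \<in> {-N, 0, N}) \<or> (I + J \<in> {-N, 0, N})"
  and c2: "I = 1 \<or> J = N - 1 \<or> (I - J - (2 - N) \<in> {-N, 0, N}) \<or> (I + J - N \<in> {-N, 0, N})"
  and c3: "I = 1 \<or> J = 0 \<or> (I - J - 1 \<in> {-N, 0, N}) \<or> (I + J - 1 \<in> {-N, 0, N})"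
  and c4: "I = 1 \<or> J = 1 \<or> (I - J \<in> {-N, 0, N}) \<or> (I + J - 2 \<in> {-N, 0, N})"
  shows "(I = 0 \<and> J = 0) \<or> (I = 1 \<and> (J = N - 1 \<or> J = 0 \<or> J = 1)) \<or> (I = 2 \<and> J = 0)"
proof (cases "I = 1")
  case True
  then show ?thesis using c1 r by auto
next
  case False
  have c2': "J = N - 1 \<or> I - J = 2 - N \<or> I - J = 2 \<or> I + J = 0 \<or> I + J = N"
    using c2 False r by auto
  have c3': "J = 0 \<or> I - J = 1 \<or> I - J = 1 - N \<or> I + J = 1 \<or> I + J = 1 + N"
    using c3 False r by auto
  have c4': "J = 1 \<or> I - J = 0 \<or> I + J = 2 \<or> I + J = 2 + N"
    using c4 False r by auto
  show ?thesis using c2' c3' c4' r False by smt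
qed

definition att :: "nat \<Rightarrow> nat \<Rightarrow> nat \<Rightarrow> nat \<Rightarrow> nat \<Rightarrow> bool" where
  "att n a b i j \<longleftrightarrow> i = a \<or> j = b \<or> (int i - int j) mod int n = (int a - int b) mod int n
     \<or> (int i + int j) mod int n = (int a + int b) mod int n"

lemma cong3:
  fixes X Y N :: int
  assumes "N > 0" "- 2 * N < X - Y" "X - Y < 2 * N"
  shows "X mod N = Y mod N \<longleftrightarrow> X - Y \<in> {-N, 0, N}"
proof
  assume "X mod N = Y mod N"
  then have "N dvd X - Y" using mod_eq_dvd_iff by blast
  then obtain q where q: "X - Y = N * q" by (auto elim: dvdE)
  have "q < 2"
  proof (rule ccontr)
    assume "\<not> q < 2" then have "N * 2 \<le> N * q" using assms by (intro mult_left_mono) auto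
    then show False using q assms by linarith
  qed
  moreover have "q > -2"
  proof (rule ccontr)
    assume "\<not> q > -2" then have "N * q \<le> N * (-2)" using assms by (intro mult_left_mono) auto
    then show False using q assms by linarith
  qed
  ultimately have "q = -1 \<or> q = 0 \<or> q = 1" by auto
  then show "X - Y \<in> {-N, 0, N}" using q by auto
next
  assume "X - Y \<in> {-N, 0, N}"
  then have "X = Y - N \<or> X = Y \<or> X = Y + N" by auto
  then show "X mod N = Y mod N" by auto
qed

lemma clique_att:
  assumes n: "odd n" "n \<ge> 5" and ij: "i < n" "j < n"
    and a: "att n 0 0 i j" "att n 1 (n-1) i j" "att n 1 0 i j" "att n 1 1 i j"
  shows "(i = 0 \<and> j = 0) \<or> (i = 1 \<and> (j = n - 1 \<or> j = 0 \<or> j = 1)) \<or> (i = 2 \<and> j = 0)"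
proof -
  define N where "N = int n"
  define I where "I = int i"
  define J where "J = int j"
  obtain m where m: "n = 2 * m + 1" using n(1) by (rule oddE)
  define M where "M = int m"
  have M: "N = 2 * M + 1" unfolding N_def M_def m by simp
  have r: "0 \<le> I" "I < N" "0 \<le> J" "J < N" "N \<ge> 5" using ij n unfolding N_def I_def J_def by auto
  have nm1: "int (n - 1) = N - 1" using n unfolding N_def by auto
  have c1: "I = 0 \<or> J = 0 \<or> (I - J \<in> {-N, 0, N}) \<or> (I + J \<in> {-N, 0, N})"
    using a(1) r cong3[of N "I - J" 0] cong3[of N "I + J" 0] unfolding att_def N_def I_def J_def by auto
  have c2: "I = 1 \<or> J = N - 1 \<or> (I - J - (2 - N) \<in> {-N, 0, N}) \<or> (I + J - N \<in> {-N, 0, N})"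
    using a(2) r cong3[of N "I - J" "2 - N"] cong3[of N "I + J" N] nm1 unfolding att_def N_def I_def J_def
    by (auto simp: algebra_simps)
  have c3: "I = 1 \<or> J = 0 \<or> (I - J - 1 \<in> {-N, 0, N}) \<or> (I + J - 1 \<in> {-N, 0, N})"
    using a(3) r cong3[of N "I - J" 1] cong3[of N "I + J" 1] unfolding att_def N_def I_def J_def by auto
  have c4: "I = 1 \<or> J = 1 \<or> (I - J \<in> {-N, 0, N}) \<or> (I + J - 2 \<in> {-N, 0, N})"
    using a(4) r cong3[of N "I - J" 0] cong3[of N "I + J" 2] unfolding att_def N_def I_def J_def by auto
  have "(I = 0 \<and> J = 0) \<or> (I = 1 \<and> (J = N - 1 \<or> J = 0 \<or> J = 1)) \<or> (I = 2 \<and> J = 0)"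
    using comb_int[OF r M c1 c2 c3 c4] .
  then show ?thesis unfolding I_def J_def N_def using n by auto
qed

lemma share2_int:
  fixes I J A B N M :: int
  assumes r: "0 \<le> I" "I < N" "0 \<le> J" "J < N" "0 \<le> A" "A < N" "0 \<le> B" "B < N" "N = 2 * M + 1"
    and ne: "\<not> (I = A \<and> J = B)"
  shows "\<not> (I = A \<and> J = B) \<and> \<not> (I = A \<and> (I - J) - (A - B) \<in> {-N, 0, N}) \<and>
         \<not> (I = A \<and> (I + J) - (A + B) \<in> {-N, 0, N}) \<and> \<not> (J = B \<and> (I - J) - (A - B) \<in> {-N, 0, N}) \<and>
         \<not> (J = B \<and> (I + J) - (A + B) \<in> {-N, 0, N}) \<and>
         \<not> ((I - J) - (A - B) \<in> {-N, 0, N} \<and> (I + J) - (A + B) \<in> {-N, 0, N})"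
  using assms by simp smt

lemma ind_sum_le1:
  assumes n: "odd n" and r: "i < n" "j < n" "a < n" "b < n" and ne: "(i, j) \<noteq> (a, b)"
  shows "ind n (int i) (int a) + ind n (int j) (int b) + ind n (int i - int j) (int a - int b)
        + ind n (int i + int j) (int a + int b) \<le> 1"
proof -
  define N where "N = int n"
  obtain m where m: "n = 2 * m + 1" using n by (rule oddE)
  define M where "M = int m"
  have M: "N = 2 * M + 1" unfolding N_def M_def m by simp
  have Np: "N > 0" unfolding N_def using r by simp
  have e3: "(int i - int j) mod N = (int a - int b) mod N \<longleftrightarrow> (int i - int j) - (int a - int b) \<in> {-N, 0, N}"
    by (rule cong3) (use r Np in \<open>auto simp: N_def\<close>)
  have e4: "(int i + int j) mod N = (int a + int b) mod N \<longleftrightarrow> (int i + int j) - (int a + int b) \<in> {-N, 0, N}"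
    by (rule cong3) (use r Np in \<open>auto simp: N_def\<close>)
  have k: "\<not> (int i = int a \<and> int j = int b) \<and> \<not> (int i = int a \<and> (int i - int j) - (int a - int b) \<in> {-N, 0, N}) \<and>
         \<not> (int i = int a \<and> (int i + int j) - (int a + int b) \<in> {-N, 0, N}) \<and> \<not> (int j = int b \<and> (int i - int j) - (int a - int b) \<in> {-N, 0, N}) \<and>
         \<not> (int j = int b \<and> (int i + int j) - (int a + int b) \<in> {-N, 0, N}) \<and>
         \<not> ((int i - int j) - (int a - int b) \<in> {-N, 0, N} \<and> (int i + int j) - (int a + int b) \<in> {-N, 0, N})"
    by (rule share2_int[OF _ _ _ _ _ _ _ _ M]) (use r ne in \<open>auto simp: N_def\<close>)
  have k2: "\<not> (i = a \<and> j = b)" "\<not> (i = a \<and> (int i - int j) mod N = (int a - int b) mod N)"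
    "\<not> (i = a \<and> (int i + int j) mod N = (int a + int b) mod N)"
    "\<not> (j = b \<and> (int i - int j) mod N = (int a - int b) mod N)"
    "\<not> (j = b \<and> (int i + int j) mod N = (int a + int b) mod N)"
    "\<not> ((int i - int j) mod N = (int a - int b) mod N \<and> (int i + int j) mod N = (int a + int b) mod N)"
    using k e3 e4 by auto
  show ?thesis using k2 ind_nat[OF r(1) r(3)] ind_nat[OF r(2) r(4)] unfolding ind_def N_def
    by (auto split: if_splits)
qed

lemma E_self:
  assumes "a < n" "b < n"
  shows "E n a b a b = 1 - 4 / real n + 3 / (real n)^2"
  unfolding E_def ind_def by simp

lemma E_lb:
  assumes n: "odd n" and r: "i < n" "j < n" "a < n" "b < n" and ne: "(i, j) \<noteq> (a, b)"
  shows "E n a b i j \<ge> 3 / (real n)^2 - (if att n a b i j then 1 else 0) / real n"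
proof (cases "att n a b i j")
  case True
  have "ind n (int i) (int a) + ind n (int j) (int b) + ind n (int i - int j) (int a - int b)
        + ind n (int i + int j) (int a + int b) \<le> 1" using ind_sum_le1[OF assms] .
  then have "(ind n (int i) (int a) + ind n (int j) (int b) + ind n (int i - int j) (int a - int b)
        + ind n (int i + int j) (int a + int b)) / real n \<le> 1 / real n"
    by (rule divide_right_mono) simp
  then show ?thesis using True ne unfolding E_def by auto
next
  case False
  then have "ind n (int i) (int a) = 0" "ind n (int j) (int b) = 0" "ind n (int i - int j) (int a - int b) = 0"
        "ind n (int i + int j) (int a + int b) = 0"
    using ind_nat[OF r(1) r(3)] ind_nat[OF r(2) r(4)] unfolding att_def ind_def by auto
  then show ?thesis using False ne unfolding E_def by auto
qed

definition Amat :: "nat \<Rightarrow> nat \<Rightarrow> nat \<Rightarrow> real" where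
  "Amat n i j = 1 / real n + (1/3) * (E n 0 0 i j + E n 1 (n-1) i j + E n 1 0 i j + E n 1 1 i j)
     + (1 / (2 * real n)) * E n 2 0 i j"

lemma Amat_line:
  assumes n: "n > 0"
  shows "(\<Sum>x<n. Amat n (p x) (q x)) = 1 + (1/3) * ((\<Sum>x<n. E n 0 0 (p x) (q x)) + (\<Sum>x<n. E n 1 (n-1) (p x) (q x))
     + (\<Sum>x<n. E n 1 0 (p x) (q x)) + (\<Sum>x<n. E n 1 1 (p x) (q x))) + (1 / (2 * real n)) * (\<Sum>x<n. E n 2 0 (p x) (q x))"
  using n by (simp add: Amat_def sum.distrib sum_distrib_left[symmetric] sum_divide_distrib[symmetric])

lemma Amat_sums:
  assumes n: "odd n" "n \<ge> 13"
  shows "\<forall>i<n. (\<Sum>j<n. Amat n i j) = 1" "\<forall>j<n. (\<Sum>i<n. Amat n i j) = 1"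
    "\<forall>k<n. (\<Sum>i<n. Amat n i ((k + n - i) mod n)) = 1" "\<forall>k<n. (\<Sum>i<n. Amat n i ((i + n - k) mod n)) = 1"
proof -
  have np: "n > 0" using n by simp
  have c: "0 < n" "1 < n" "n - 1 < n" "2 < n" using n by auto
  show "\<forall>i<n. (\<Sum>j<n. Amat n i j) = 1"
    using Amat_line[OF np, of "\<lambda>x. _" "\<lambda>x. x"] E_row[OF n(1) np] c by simp
  show "\<forall>j<n. (\<Sum>i<n. Amat n i j) = 1"
    using Amat_line[OF np, of "\<lambda>x. x" "\<lambda>x. _"] E_col[OF n(1) np] c by simp
  show "\<forall>k<n. (\<Sum>i<n. Amat n i ((k + n - i) mod n)) = 1"
    using Amat_line[OF np, of "\<lambda>x. x" "\<lambda>x. (_ + n - x) mod n"] E_up[OF n(1) np] c by simp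
  show "\<forall>k<n. (\<Sum>i<n. Amat n i ((i + n - k) mod n)) = 1"
    using Amat_line[OF np, of "\<lambda>x. x" "\<lambda>x. (x + n - _) mod n"] E_down[OF n(1) np] c by simp
qed

lemma E_wk:
  assumes n: "odd n" and r: "i < n" "j < n" "a < n" "b < n" and ne: "(i, j) \<noteq> (a, b)"
  shows "E n a b i j \<ge> 3 / (real n)^2 - 1 / real n"
proof -
  have "(if att n a b i j then 1 else 0) / real n \<le> 1 / real n" by (simp add: divide_right_mono)
  then show ?thesis using E_lb[OF assms] by linarith
qed

lemma fin1a: fixes S P u v w :: real
  shows "S \<ge> 12 * v - 4 * u \<Longrightarrow> P = u/2 - 2 * v + 3/2 * w \<Longrightarrow> u > 0 \<Longrightarrow> v \<ge> 0 \<Longrightarrow> w \<ge> 0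
    \<Longrightarrow> 0 \<le> u + 1/3 * S + P"
  by linarith

lemma fin1: fixes S P u :: real
  shows "S \<ge> 12 * u^2 - 4 * u \<Longrightarrow> P = u/2 - 2 * u^2 + 3/2 * u^3 \<Longrightarrow> u > 0 \<Longrightarrow> u^2 \<ge> 0 \<Longrightarrow> u^3 \<ge> 0
    \<Longrightarrow> 0 \<le> u + 1/3 * S + P"
  by (rule fin1a)

lemma fin2a: fixes S P u su v w :: real
  shows "S \<ge> 12 * v - su \<Longrightarrow> su \<le> 3 * u \<Longrightarrow> P \<ge> 3/2 * w - 1/2 * v \<Longrightarrow> u > 0 \<Longrightarrow> v \<ge> 0 \<Longrightarrow> w \<ge> 0
    \<Longrightarrow> 0 \<le> u + 1/3 * S + P"
  by linarith

lemma fin2: fixes S P u su :: real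
  shows "S \<ge> 12 * u^2 - su \<Longrightarrow> su \<le> 3 * u \<Longrightarrow> P \<ge> 3/2 * u^3 - 1/2 * u^2 \<Longrightarrow> u > 0 \<Longrightarrow> u^2 \<ge> 0 \<Longrightarrow> u^3 \<ge> 0
    \<Longrightarrow> 0 \<le> u + 1/3 * S + P"
  by (rule fin2a)

lemma Amat_bounds:
  assumes n: "odd n" "n \<ge> 13" and r: "i < n" "j < n"
  shows "Amat n i j \<ge> 0"
    and "(i, j) \<in> {(0,0), (1, n-1), (1,0), (1,1)} \<Longrightarrow>
         Amat n i j \<ge> 1/3 - 4/3 * (1 / real n) + 7/2 * (1 / real n)^2 + 3/2 * (1 / real n)^3"
proof -
  define u where "u = 1 / real n"
  have u: "u > 0" "u \<le> 1/13" using n unfolding u_def by (auto simp: field_simps)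
  have u2: "3 / (real n)^2 = 3 * u^2" "\<And>c. c / real n = c * u" unfolding u_def by (auto simp: field_simps)
  have u5: "1 / (2 * real n) = u / 2" unfolding u_def by simp
  have c: "0 < n" "1 < n" "n - 1 < n" "2 < n" using n by auto
  have dist: "(0::nat,0::nat) \<noteq> (1, n-1)" "(1::nat, n-1) \<noteq> (1,0)" "(1::nat, n-1) \<noteq> (1,1)" "(2::nat,0::nat) \<noteq> (1, n-1)"
    using n by auto
  have sq: "u^2 \<ge> 0" "u^3 \<ge> 0" using u by auto
  have A: "Amat n i j = u + (1/3) * (E n 0 0 i j + E n 1 (n-1) i j + E n 1 0 i j + E n 1 1 i j)
     + (u/2) * E n 2 0 i j" unfolding Amat_def u5 u_def by simp
  have wk: "\<And>a b. a < n \<Longrightarrow> b < n \<Longrightarrow> (i, j) \<noteq> (a, b) \<Longrightarrow> E n a b i j \<ge> 3 * u^2 - u"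
    using E_wk[OF n(1) r] u2 by simp
  have self: "\<And>a b. a < n \<Longrightarrow> b < n \<Longrightarrow> (i, j) = (a, b) \<Longrightarrow> E n a b i j = 1 - 4 * u + 3 * u^2"
    using E_self u2 by auto
  have m5: "\<And>e. e \<ge> 3 * u^2 - u \<Longrightarrow> (u/2) * e \<ge> (u/2) * (3 * u^2 - u)"
    using u by (intro mult_left_mono) auto
  have m5e: "(u/2) * (3 * u^2 - u) = 3/2 * u^3 - 1/2 * u^2" by (simp add: power2_eq_square power3_eq_cube algebra_simps)
  have m5s: "(u/2) * (1 - 4 * u + 3 * u^2) = u/2 - 2 * u^2 + 3/2 * u^3" by (simp add: power2_eq_square power3_eq_cube algebra_simps)
  have cl: "Amat n i j \<ge> 1/3 - 4/3 * u + 7/2 * u^2 + 3/2 * u^3"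
    if cs: "(i, j) \<in> {(0,0), (1, n-1), (1,0), (1,1)}"
  proof -
    have ne5: "(i, j) \<noteq> (2, 0)" using cs n by auto
    have e5: "(u/2) * E n 2 0 i j \<ge> 3/2 * u^3 - 1/2 * u^2" using m5[OF wk[OF c(4) c(1) ne5]] m5e by simp
    have "E n 0 0 i j + E n 1 (n-1) i j + E n 1 0 i j + E n 1 1 i j \<ge> 1 - 4 * u + 3 * u^2 + 3 * (3 * u^2 - u)"
      using cs
    proof (elim insertE emptyE)
      assume h: "(i, j) = (0, 0)"
      show ?thesis using self[OF c(1) c(1) h] wk[OF c(2) c(3)] wk[OF c(2) c(1)] wk[OF c(2) c(2)] h dist by auto
    next
      assume h: "(i, j) = (1, n-1)"
      show ?thesis using self[OF c(2) c(3) h] wk[OF c(1) c(1)] wk[OF c(2) c(1)] wk[OF c(2) c(2)] h dist n by auto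
    next
      assume h: "(i, j) = (1, 0)"
      show ?thesis using self[OF c(2) c(1) h] wk[OF c(1) c(1)] wk[OF c(2) c(3)] wk[OF c(2) c(2)] h dist n by auto
    next
      assume h: "(i, j) = (1, 1)"
      show ?thesis using self[OF c(2) c(2) h] wk[OF c(1) c(1)] wk[OF c(2) c(3)] wk[OF c(2) c(1)] h dist n by auto
    qed
    then show ?thesis unfolding A using e5 by (simp add: algebra_simps)
  qed
  then show "(i, j) \<in> {(0,0), (1, n-1), (1,0), (1,1)} \<Longrightarrow>
         Amat n i j \<ge> 1/3 - 4/3 * (1 / real n) + 7/2 * (1 / real n)^2 + 3/2 * (1 / real n)^3"
    unfolding u_def by simp
  show "Amat n i j \<ge> 0"
  proof (cases "(i, j) \<in> {(0,0), (1, n-1), (1,0), (1,1)}")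
    case True
    then show ?thesis using cl[OF True] u sq by linarith
  next
    case notc: False
    show ?thesis
    proof (cases "(i, j) = (2, 0)")
      case True
      have "E n 0 0 i j + E n 1 (n-1) i j + E n 1 0 i j + E n 1 1 i j \<ge> 12 * u^2 - 4 * u"
        using wk[OF c(1) c(1)] wk[OF c(2) c(3)] wk[OF c(2) c(1)] wk[OF c(2) c(2)] True dist by auto
      moreover have "(u/2) * E n 2 0 i j = u/2 - 2 * u^2 + 3/2 * u^3" using self[OF c(4) c(1) True] m5s by simp
      ultimately show ?thesis unfolding A using u sq fin1 by blast
    next
      case n5: False
      define s where "s = (if att n 0 0 i j then 1 else 0) + (if att n 1 (n-1) i j then 1 else 0)
         + (if att n 1 0 i j then 1 else 0) + (if att n 1 1 i j then 1 else (0::real))"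
      have "\<not> (att n 0 0 i j \<and> att n 1 (n-1) i j \<and> att n 1 0 i j \<and> att n 1 1 i j)"
        using clique_att[OF n(1) _ r] notc n5 n by auto
      then have s3: "s \<le> 3" unfolding s_def by auto
      have lb: "\<And>a b. a < n \<Longrightarrow> b < n \<Longrightarrow> (i, j) \<noteq> (a, b) \<Longrightarrow>
          E n a b i j \<ge> 3 * u^2 - (if att n a b i j then 1 else 0) * u"
        using E_lb[OF n(1) r] u2 by simp
      have "E n 0 0 i j + E n 1 (n-1) i j + E n 1 0 i j + E n 1 1 i j \<ge> 12 * u^2 - s * u"
        using lb[OF c(1) c(1)] lb[OF c(2) c(3)] lb[OF c(2) c(1)] lb[OF c(2) c(2)] notc
        unfolding s_def by (auto simp: algebra_simps)
      moreover have "s * u \<le> 3 * u" using s3 u by (intro mult_right_mono) auto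
      moreover have "(u/2) * E n 2 0 i j \<ge> 3/2 * u^3 - 1/2 * u^2" using m5[OF wk[OF c(4) c(1) n5]] m5e by simp
      ultimately show ?thesis unfolding A using u sq fin2 by blast
    qed
  qed
qed

lemma const_pan:
  assumes "n > 0"
  shows "panstochastic n (\<lambda>i j. 1 / real n)"
proof -
  have u: "(\<Sum>(i, j)\<in>upward_diag n k. 1 / real n) = 1" if "k < n" for k
    using sum_up[OF that, of "\<lambda>i j. 1 / real n"] assms by simp
  have d: "(\<Sum>(i, j)\<in>downward_diag n k. 1 / real n) = 1" if "k < n" for k
    using sum_down[OF that, of "\<lambda>i j. 1 / real n"] assms by simp
  show ?thesis unfolding panstochastic_def doubly_stochastic_def using assms u d by simp
qed

lemma case_even:
  assumes "even n" "n > 1"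
  shows "\<exists>A. panstochastic n A \<and>
           \<not> convex_comb_of n (\<lambda>P. permutation_matrix n P \<and> panstochastic n P) A"
proof (intro exI conjI)
  show "panstochastic n (\<lambda>i j. 1 / real n)" using const_pan assms by simp
  show "\<not> convex_comb_of n (\<lambda>P. permutation_matrix n P \<and> panstochastic n P) (\<lambda>i j. 1 / real n)"
    by (rule not_cc_empty) (use no_pan_even[OF assms(1)] assms in auto)
qed

lemma case3:
  "\<exists>A. panstochastic 3 A \<and>
           \<not> convex_comb_of 3 (\<lambda>P. permutation_matrix 3 P \<and> panstochastic 3 P) A"
proof (intro exI conjI)
  show "panstochastic 3 (\<lambda>i j. 1 / real 3)" using const_pan[of 3] by simp
  show "\<not> convex_comb_of 3 (\<lambda>P. permutation_matrix 3 P \<and> panstochastic 3 P) (\<lambda>i j. 1 / real 3)"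
    by (rule not_cc_clique) auto
qed

lemma fin3a: fixes u v w :: real
  shows "u > 0 \<Longrightarrow> u \<le> 1/13 \<Longrightarrow> v - 2/13 * u + 1/169 \<ge> 0 \<Longrightarrow> w \<ge> 0 \<Longrightarrow>
    4/3 - 16/3 * u + 14 * v + 6 * w > 1"
  by linarith

lemma case_big:
  assumes n: "odd n" "n \<ge> 13"
  shows "\<exists>A. panstochastic n A \<and>
           \<not> convex_comb_of n (\<lambda>P. permutation_matrix n P \<and> panstochastic n P) A"
proof (intro exI conjI)
  have np: "n > 0" using n by simp
  show "panstochastic n (Amat n)"
    unfolding panstochastic_def doubly_stochastic_def
    using Amat_bounds(1)[OF n] Amat_sums[OF n] by (simp add: sum_up sum_down)
  define u where "u = 1 / real n"
  have u: "u > 0" "u \<le> 1/13" using n unfolding u_def by (auto simp: field_simps)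
  have c: "0 < n" "1 < n" "n - 1 < n" using n by auto
  have L: "\<And>i j. (i, j) \<in> {(0,0), (1, n-1), (1,0), (1,1)} \<Longrightarrow> i < n \<Longrightarrow> j < n \<Longrightarrow>
      Amat n i j \<ge> 1/3 - 4/3 * u + 7/2 * u^2 + 3/2 * u^3"
    using Amat_bounds(2)[OF n] unfolding u_def by blast
  have sq: "u^2 - 2/13 * u + 1/169 \<ge> 0"
  proof -
    have "(u - 1/13)^2 \<ge> 0" by simp
    then show ?thesis by (simp add: power2_eq_square algebra_simps)
  qed
  have "4/3 - 16/3 * u + 14 * u^2 + 6 * u^3 > 1"
    by (rule fin3a) (use u sq in auto)
  moreover have "4 * (1/3 - 4/3 * u + 7/2 * u^2 + 3/2 * u^3) = 4/3 - 16/3 * u + 14 * u^2 + 6 * u^3"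
    by (simp add: algebra_simps)
  moreover have "Amat n 0 0 + Amat n 1 (n-1) + Amat n 1 0 + Amat n 1 1 \<ge> 4 * (1/3 - 4/3 * u + 7/2 * u^2 + 3/2 * u^3)"
    using L[of 0 0] L[of 1 "n-1"] L[of 1 0] L[of 1 1] c by auto
  ultimately have "Amat n 0 0 + Amat n 1 (n-1) + Amat n 1 0 + Amat n 1 1 > 1" by linarith
  then show "\<not> convex_comb_of n (\<lambda>P. permutation_matrix n P \<and> panstochastic n P) (Amat n)"
    using not_cc_clique[of n "Amat n"] n by simp
qed

theorem theorem1p2:
  fixes n :: nat
  assumes "n > 1" and "n \<noteq> 5"
  shows "\<exists>A. panstochastic n A \<and>
           \<not> convex_comb_of n (\<lambda>P. permutation_matrix n P \<and> panstochastic n P) A"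
proof (cases "even n")
  case True
  then show ?thesis using case_even assms by blast
next
  case False
  then have "n = 3 \<or> n = 7 \<or> n = 9 \<or> n = 11 \<or> n \<ge> 13" using assms by presburger
  then show ?thesis
  proof (elim disjE)
    assume "n = 3" then show ?thesis using case3 by simp
  next
    assume "n = 7" then show ?thesis using case_explicit by simp
  next
    assume "n = 9" then show ?thesis using case_explicit by simp
  next
    assume "n = 11" then show ?thesis using case_explicit by simp
  next
    assume "n \<ge> 13" then show ?thesis using case_big False by simp
  qed
qed

end
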